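(* Consider a finite quiver with nodes $i=1,\dots,n$, each carrying an integer $N_i\ge 2$ and a non-negative integer $F_i$ (number of fundamental hypermultiplets), and with a finite multiset $E$ of edges, each edge $e$ joining two distinct nodes $s(e)\neq t(e)$ (bifundamental hypermultiplets; no loops/adjoints). For $\mathbf m=(m_{ia})_{1\le i\le n,\,1\le a\le N_i}\in\mathbb Z^{\sum_i N_i}$ define $$\Delta(\mathbf m)=\frac12\sum_{i=1}^n F_i\sum_{a=1}^{N_i}|m_{ia}|+\frac12\sum_{e\in E}\sum_{a=1}^{N_{s(e)}}\sum_{b=1}^{N_{t(e)}}|m_{s(e)a}-m_{t(e)b}|-\sum_{i=1}^n\sum_{1\le a<b\le N_i}|m_{ia}-m_{ib}|.$$ Assume that $\Delta(\mathbf m)\ge 1$ for every nonzero $\mathbf m$. Then every $\mathbf m$ with $\Delta(\mathbf m)=1$ has either all components $m_{ia}\ge 0$ or all components $m_{ia}\le 0$; moreover, for such $\mathbf m$ the traces $\sum_{a=1}^{N_i} m_{ia}$, $i=1,\dots,n$, are not all zero.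
   Context: This $\Delta(\mathbf m)$ is the monopole dimension of a 3d $\mathcal N=4$ gauge theory with gauge group $\prod_i U(N_i)$, fundamental and bifundamental hypermultiplets; the hypothesis $\Delta(\mathbf m)\ge 1$ for all $\mathbf m\neq 0$ is the paper's notion of a "good" theory. *)

theory Defs
  imports Main "HOL-Library.Multiset" Complex_Main
begin

text \<open>Quiver with nodes 0..n-1 (the paper's 1..n), ranks N i, flavours F i,
  edges a multiset of pairs (s e, t e). A magnetic charge is m :: nat => nat => int,
  only the entries m i a with i < n, a < N i are relevant.\<close>

definition monopole_dim ::
  "nat \<Rightarrow> (nat \<Rightarrow> nat) \<Rightarrow> (nat \<Rightarrow> nat) \<Rightarrow> (nat \<times> nat) multiset \<Rightarrow> (nat \<Rightarrow> nat \<Rightarrow> int) \<Rightarrow> real"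
where
  "monopole_dim n N F E m =
     (1/2) * (\<Sum>i<n. real (F i) * (\<Sum>a<N i. real_of_int \<bar>m i a\<bar>))
   + (1/2) * (\<Sum>\<^sub># (image_mset (\<lambda>e. \<Sum>a<N (fst e). \<Sum>b<N (snd e).
                 real_of_int \<bar>m (fst e) a - m (snd e) b\<bar>) E))
   - (\<Sum>i<n. \<Sum>b<N i. \<Sum>a<b. real_of_int \<bar>m i a - m i b\<bar>)"

definition charge_nonzero :: "nat \<Rightarrow> (nat \<Rightarrow> nat) \<Rightarrow> (nat \<Rightarrow> nat \<Rightarrow> int) \<Rightarrow> bool" where
  "charge_nonzero n N m \<longleftrightarrow> (\<exists>i<n. \<exists>a<N i. m i a \<noteq> 0)"

end

theory Submission
  imports Defs
begin

lemma abs_split: "\<bar>(x::int) - y\<bar> = \<bar>max x 0 - max y 0\<bar> + \<bar>min x 0 - min y 0\<bar>"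
  by (simp add: max_def min_def abs_if)

lemma abs_split0: "\<bar>(x::int)\<bar> = \<bar>max x 0\<bar> + \<bar>min x 0\<bar>"
  by (simp add: max_def min_def abs_if)

lemma sum_mset_add_fun: "(\<Sum>\<^sub># (image_mset (\<lambda>e. f e + g e) M)) =
   (\<Sum>\<^sub># (image_mset f M)) + (\<Sum>\<^sub># (image_mset g M)::real)"
  by (induction M) auto

lemma dim_split:
  "monopole_dim n N F E m = monopole_dim n N F E (\<lambda>i a. max (m i a) 0)
      + monopole_dim n N F E (\<lambda>i a. min (m i a) 0)"
proof -
  have A: "(\<Sum>i<n. real (F i) * (\<Sum>a<N i. real_of_int \<bar>m i a\<bar>)) =
     (\<Sum>i<n. real (F i) * (\<Sum>a<N i. real_of_int \<bar>max (m i a) 0\<bar>)) +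
     (\<Sum>i<n. real (F i) * (\<Sum>a<N i. real_of_int \<bar>min (m i a) 0\<bar>))"
    by (subst abs_split0) (simp add: sum.distrib distrib_left sum_subtractf right_diff_distrib sum_negf)
  have B: "(\<Sum>i<n. \<Sum>b<N i. \<Sum>a<b. real_of_int \<bar>m i a - m i b\<bar>) =
     (\<Sum>i<n. \<Sum>b<N i. \<Sum>a<b. real_of_int \<bar>max (m i a) 0 - max (m i b) 0\<bar>) +
     (\<Sum>i<n. \<Sum>b<N i. \<Sum>a<b. real_of_int \<bar>min (m i a) 0 - min (m i b) 0\<bar>)"
    by (subst abs_split) (simp add: sum.distrib)
  have C: "(\<lambda>e. \<Sum>a<N (fst e). \<Sum>b<N (snd e). real_of_int \<bar>m (fst e) a - m (snd e) b\<bar>) =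
     (\<lambda>e. (\<Sum>a<N (fst e). \<Sum>b<N (snd e). real_of_int \<bar>max (m (fst e) a) 0 - max (m (snd e) b) 0\<bar>)
      + (\<Sum>a<N (fst e). \<Sum>b<N (snd e). real_of_int \<bar>min (m (fst e) a) 0 - min (m (snd e) b) 0\<bar>))"
    by (rule ext, subst abs_split) (simp add: sum.distrib)
  show ?thesis unfolding monopole_dim_def A B C sum_mset_add_fun by (simp add: algebra_simps)
qed

lemma dim_zero:
  assumes edges: "\<forall>e\<in>#E. fst e < n \<and> snd e < n \<and> fst e \<noteq> snd e"
    and z: "\<not> charge_nonzero n N m"
  shows "monopole_dim n N F E m = 0"
proof -
  have z': "\<And>i a. i < n \<Longrightarrow> a < N i \<Longrightarrow> m i a = 0" using z unfolding charge_nonzero_def by auto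
  have "image_mset (\<lambda>e. \<Sum>a<N (fst e). \<Sum>b<N (snd e). real_of_int \<bar>m (fst e) a - m (snd e) b\<bar>) E
        = image_mset (\<lambda>e. 0) E"
    by (rule image_mset_cong) (use edges z' in auto)
  then show ?thesis unfolding monopole_dim_def using z' by simp
qed

theorem mainTheorem3:
  fixes n :: nat and N F :: "nat \<Rightarrow> nat" and E :: "(nat \<times> nat) multiset"
  assumes ranks: "\<forall>i<n. N i \<ge> 2"
    and edges: "\<forall>e\<in>#E. fst e < n \<and> snd e < n \<and> fst e \<noteq> snd e"
    and good: "\<forall>m. charge_nonzero n N m \<longrightarrow> monopole_dim n N F E m \<ge> 1"
  shows "\<forall>m. monopole_dim n N F E m = 1 \<longrightarrow>
           (((\<forall>i<n. \<forall>a<N i. m i a \<ge> 0) \<or> (\<forall>i<n. \<forall>a<N i. m i a \<le> 0))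
            \<and> (\<exists>i<n. (\<Sum>a<N i. m i a) \<noteq> 0))"
proof (intro allI impI)
  fix m assume d1: "monopole_dim n N F E m = 1"
  have sgn: "(\<forall>i<n. \<forall>a<N i. m i a \<ge> 0) \<or> (\<forall>i<n. \<forall>a<N i. m i a \<le> 0)"
  proof (rule ccontr)
    assume "\<not> ?thesis"
    then obtain i a j b where ia: "i < n" "a < N i" "m i a < 0" and jb: "j < n" "b < N j" "m j b > 0"
      by (meson not_le)
    have "charge_nonzero n N (\<lambda>i a. max (m i a) 0)" unfolding charge_nonzero_def using jb by force
    moreover have "charge_nonzero n N (\<lambda>i a. min (m i a) 0)" unfolding charge_nonzero_def using ia by force
    ultimately have "monopole_dim n N F E (\<lambda>i a. max (m i a) 0) \<ge> 1"
      "monopole_dim n N F E (\<lambda>i a. min (m i a) 0) \<ge> 1" using good by blast+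
    then show False using dim_split[of n N F E m] d1 by linarith
  qed
  have nz: "charge_nonzero n N m" using dim_zero[OF edges] d1 by force
  then obtain i a where ia: "i < n" "a < N i" "m i a \<noteq> 0" unfolding charge_nonzero_def by blast
  have "(\<Sum>a<N i. m i a) \<noteq> 0"
    using sgn
  proof
    assume p: "\<forall>i<n. \<forall>a<N i. m i a \<ge> 0"
    have "0 < (\<Sum>a<N i. m i a)"
      by (rule sum_pos2[of _ a]) (use p ia in \<open>auto simp: order_less_le\<close>)
    then show ?thesis by simp
  next
    assume p: "\<forall>i<n. \<forall>a<N i. m i a \<le> 0"
    have "0 < (\<Sum>a<N i. - m i a)"
      by (rule sum_pos2[of _ a]) (use p ia in force)+
    then show ?thesis by (simp add: sum_negf)
  qed
  with sgn ia show "((\<forall>i<n. \<forall>a<N i. m i a \<ge> 0) \<or> (\<forall>i<n. \<forall>a<N i. m i a \<le> 0))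
            \<and> (\<exists>i<n. (\<Sum>a<N i. m i a) \<noteq> 0)" by blast
qed

end
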